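(* $\mathrm{PoTF}_{\textsc{Min-Max}}=\Theta(\min(\tau,n))$, i.e., the price of temporal fairness with respect to the \textsc{Min-Max} objective is both $O(\min(\tau,n))$ and $\Omega(\min(\tau,n))$, where $n$ is the number of agents and $\tau$ the number of constraints.
   Context: An instance $\mathcal{I}=(N,P,T,(\mathbf{D}_i)_{i\in N})$ has agents $N=[n]$, projects $P$, timesteps $T=[\ell]$, and disapproval sets $D_{ik}\subseteq P$. An outcome is $\mathbf{o}=(o_1,\dots,o_\ell)\in P^\ell$; $\Pi(\mathcal{I})$ is the set of all outcomes. $d_i(\mathbf{o}^{(k)})=|\{t\in[k]:o_t\in D_{it}\}|$ and $d_i(\mathbf{o})=d_i(\mathbf{o}^{(\ell)})$. A set of constraints is $\mathbf{A}=\{(t_1,\lambda_1),\dots,(t_\tau,\lambda_\tau)\}$ with $t_j\in T$, $\lambda_j\in\{0,\dots,\ell\}$, $t_1\le\dots\le t_\tau$, $\lambda_1\le\dots\le\lambda_\tau$; $\Pi_{\mathbf{A}}(\mathcal{I})$ is the set of outcomes with $\max_{i\in N}d_i(\mathbf{o}^{(t)})\le\lambda$ for all $(t,\lambda)\in\mathbf{A}$, and $\mathbf{A}$ is feasible if $\Pi_{\mathbf{A}}(\mathcal{I})\neq\emptyset$. The \textsc{Min-Max}-value of $\mathbf{o}$ is $\max_{i\in N}d_i(\mathbf{o})$. The price of temporal fairness is $\mathrm{PoTF}_{\textsc{Min-Max}}=\sup_{\mathcal{I},\mathbf{A}\text{ feasible}}\frac{\min_{\mathbf{o}\in\Pi_{\mathbf{A}}(\mathcal{I})}\max_i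 d_i(\mathbf{o})}{\min_{\mathbf{o}\in\Pi(\mathcal{I})}\max_i d_i(\mathbf{o})}$, considered as a function of $n$ and $\tau$. *)

theory Defs
  imports Main "HOL-Library.Extended_Real"
begin

(* Agents N = {1..n}, timesteps T = {1..l}, projects P (a finite nonempty set of nat
   labels), disapproval sets D i t (agent i, timestep t).
   An outcome is a function ou :: nat => nat with ou t \<in> P for every t \<in> T
   (values outside T are irrelevant). *)

definition valid_instance :: "nat \<Rightarrow> nat set \<Rightarrow> nat \<Rightarrow> (nat \<Rightarrow> nat \<Rightarrow> nat set) \<Rightarrow> bool" where
  "valid_instance n P l D \<longleftrightarrow> n \<ge> 1 \<and> finite P \<and> P \<noteq> {} \<and> l \<ge> 1 \<and>
     (\<forall>i\<in>{1..n}. \<forall>t\<in>{1..l}. D i t \<subseteq> P)"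

definition outcomes :: "nat set \<Rightarrow> nat \<Rightarrow> (nat \<Rightarrow> nat) set" where
  "outcomes P l = {ou. \<forall>t\<in>{1..l}. ou t \<in> P}"

definition disut :: "(nat \<Rightarrow> nat \<Rightarrow> nat set) \<Rightarrow> nat \<Rightarrow> (nat \<Rightarrow> nat) \<Rightarrow> nat \<Rightarrow> nat" where
  "disut D i ou k = card {t\<in>{1..k}. ou t \<in> D i t}"

definition maxdis :: "nat \<Rightarrow> (nat \<Rightarrow> nat \<Rightarrow> nat set) \<Rightarrow> (nat \<Rightarrow> nat) \<Rightarrow> nat \<Rightarrow> nat" where
  "maxdis n D ou k = Max ((\<lambda>i. disut D i ou k) ` {1..n})"

definition valid_constraints :: "nat \<Rightarrow> (nat \<times> nat) list \<Rightarrow> bool" where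
  "valid_constraints l A \<longleftrightarrow> distinct A \<and> sorted (map fst A) \<and> sorted (map snd A) \<and>
     (\<forall>(t, lam)\<in>set A. t \<in> {1..l} \<and> lam \<le> l)"

definition constrained_outcomes ::
  "nat \<Rightarrow> nat set \<Rightarrow> nat \<Rightarrow> (nat \<Rightarrow> nat \<Rightarrow> nat set) \<Rightarrow> (nat \<times> nat) list \<Rightarrow> (nat \<Rightarrow> nat) set" where
  "constrained_outcomes n P l D A =
     {ou \<in> outcomes P l. \<forall>(t, lam)\<in>set A. maxdis n D ou t \<le> lam}"

definition minmax_opt :: "nat \<Rightarrow> nat \<Rightarrow> (nat \<Rightarrow> nat \<Rightarrow> nat set) \<Rightarrow> (nat \<Rightarrow> nat) set \<Rightarrow> nat" where
  "minmax_opt n l D S = Min ((\<lambda>ou. maxdis n D ou l) ` S)"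

(* set of ratios realised by instances with n agents and feasible constraint sets of size tau;
   instances whose unconstrained optimum is 0 (ratio 0/0) are excluded *)
definition potf_ratios :: "nat \<Rightarrow> nat \<Rightarrow> real set" where
  "potf_ratios n tau =
     {real (minmax_opt n l D (constrained_outcomes n P l D A)) / real (minmax_opt n l D (outcomes P l))
      | P l D A. valid_instance n P l D \<and> valid_constraints l A \<and> length A = tau \<and>
          constrained_outcomes n P l D A \<noteq> {} \<and> minmax_opt n l D (outcomes P l) > 0}"

definition PoTF_MinMax :: "nat \<Rightarrow> nat \<Rightarrow> ereal" where
  "PoTF_MinMax n tau = (SUP x\<in>potf_ratios n tau. ereal x)"

end

theory Submission
  imports Defs
begin


lemma card_filter_sum:
  assumes "finite A"
  shows "card {x\<in>A. P x} = (\<Sum>x\<in>A. if P x then 1 else 0 :: nat)"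
  using assms by (simp add: sum.inter_filter[symmetric])

lemma disut_le: "disut D i ou k \<le> k"
proof -
  have "disut D i ou k \<le> card {1..k}" unfolding disut_def
    by (rule card_mono) auto
  then show ?thesis by simp
qed

lemma disut_le_maxdis: "i \<in> {1..n} \<Longrightarrow> disut D i ou k \<le> maxdis n D ou k"
  unfolding maxdis_def by (rule Max_ge) auto

lemma maxdis_leI: "n \<ge> 1 \<Longrightarrow> (\<And>i. i \<in> {1..n} \<Longrightarrow> disut D i ou k \<le> c) \<Longrightarrow> maxdis n D ou k \<le> c"
  unfolding maxdis_def by (subst Max_le_iff) auto

lemma maxdis_le: "n \<ge> 1 \<Longrightarrow> maxdis n D ou k \<le> k"
  by (rule maxdis_leI) (auto intro: disut_le)

lemma finite_img: "n \<ge> 1 \<Longrightarrow> finite ((\<lambda>ou. maxdis n D ou l) ` S)"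
  by (rule finite_subset[of _ "{..l}"]) (auto intro: maxdis_le)

lemma minmax_le: "ou \<in> S \<Longrightarrow> n \<ge> 1 \<Longrightarrow> minmax_opt n l D S \<le> maxdis n D ou l"
  unfolding minmax_opt_def by (rule Min_le) (auto intro: finite_img)

lemma minmax_ge: "S \<noteq> {} \<Longrightarrow> n \<ge> 1 \<Longrightarrow> (\<And>ou. ou\<in>S \<Longrightarrow> c \<le> maxdis n D ou l) \<Longrightarrow> c \<le> minmax_opt n l D S"
  unfolding minmax_opt_def by (subst Min_ge_iff) (auto intro: finite_img)

lemma minmax_attained: "S \<noteq> {} \<Longrightarrow> n \<ge> 1 \<Longrightarrow> \<exists>ou\<in>S. minmax_opt n l D S = maxdis n D ou l"
  unfolding minmax_opt_def
  using Min_in[OF finite_img[of n D l S]] by auto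



lemma disut_mono_sub:
  assumes "\<And>t. t \<in> {1..k} \<Longrightarrow> ou t \<in> D i t \<Longrightarrow> ou' t \<in> D i t"
  shows "disut D i ou k \<le> disut D i ou' k"
  unfolding disut_def by (rule card_mono) (use assms in auto)

lemma ub_n:
  assumes n1: "n \<ge> 1"
    and o1: "o1 \<in> constrained_outcomes n P l D A"
    and os: "os \<in> outcomes P l"
  shows "minmax_opt n l D (constrained_outcomes n P l D A) \<le> n * maxdis n D os l"
proof -
  define ou where "ou = (\<lambda>t. if \<exists>i\<in>{1..n}. os t \<in> D i t then o1 t else os t)"
  have sub: "disut D i ou k \<le> disut D i o1 k" if "i \<in> {1..n}" for i k
    by (rule disut_mono_sub) (use that in \<open>auto simp: ou_def split: if_splits\<close>)
  have o1c: "o1 \<in> outcomes P l" and o1s: "\<forall>(t, lam)\<in>set A. maxdis n D o1 t \<le> lam"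
    using o1 unfolding constrained_outcomes_def by auto
  have "ou \<in> outcomes P l" using o1c os unfolding outcomes_def ou_def by auto
  moreover have "\<forall>(t, lam)\<in>set A. maxdis n D ou t \<le> lam"
  proof (intro ballI, clarify)
    fix t lam assume "(t, lam) \<in> set A"
    then have "maxdis n D o1 t \<le> lam" using o1s by auto
    moreover have "maxdis n D ou t \<le> maxdis n D o1 t"
      by (rule maxdis_leI[OF n1]) (meson sub disut_le_maxdis order_trans)
    ultimately show "maxdis n D ou t \<le> lam" by simp
  qed
  ultimately have ouc: "ou \<in> constrained_outcomes n P l D A"
    unfolding constrained_outcomes_def by auto
  have "maxdis n D ou l \<le> n * maxdis n D os l"
  proof (rule maxdis_leI[OF n1])
    fix i assume "i \<in> {1..n}"
    have "disut D i ou l \<le> card (\<Union>j\<in>{1..n}. {t\<in>{1..l}. os t \<in> D j t})"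
      unfolding disut_def by (rule card_mono) (use \<open>i \<in> {1..n}\<close> in \<open>auto simp: ou_def split: if_splits\<close>)
    also have "\<dots> \<le> (\<Sum>j\<in>{1..n}. card {t\<in>{1..l}. os t \<in> D j t})"
      by (rule card_UN_le) simp
    also have "\<dots> \<le> (\<Sum>j\<in>{1..n}. maxdis n D os l)"
      by (rule sum_mono) (metis disut_def disut_le_maxdis)
    also have "\<dots> = n * maxdis n D os l" by simp
    finally show "disut D i ou l \<le> n * maxdis n D os l" .
  qed
  moreover have "minmax_opt n l D (constrained_outcomes n P l D A) \<le> maxdis n D ou l"
    by (rule minmax_le[OF ouc n1])
  ultimately show ?thesis by linarith
qed



lemma ub_tau:
  assumes n1: "n \<ge> 1"
    and vc: "valid_constraints l A"
    and o1: "o1 \<in> constrained_outcomes n P l D A"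
    and os: "os \<in> outcomes P l"
  shows "minmax_opt n l D (constrained_outcomes n P l D A) \<le> (length A + 1) * maxdis n D os l"
proof -
  define k where "k = maxdis n D os l"
  define tau where "tau = length A"
  define lam where "lam j = (if j = 0 then 0 else snd (A!(j-1)))" for j
  define tt where "tt j = (if j = 0 then 0 else fst (A!(j-1)))" for j
  have sA: "sorted (map snd A)" and sF: "sorted (map fst A)"
    and inr: "\<forall>(t, lam)\<in>set A. t \<in> {1..l} \<and> lam \<le> l"
    using vc unfolding valid_constraints_def by auto
  have lam_mono: "lam a \<le> lam b" if "a \<le> b" "b \<le> tau" for a b
  proof (cases "a = 0")
    case True then show ?thesis by (simp add: lam_def)
  next
    case False
    then have "(map snd A)!(a-1) \<le> (map snd A)!(b-1)"
      using that by (intro sorted_nth_mono[OF sA]) (auto simp: tau_def)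
    then show ?thesis using that False by (simp add: lam_def tau_def)
  qed
  have tt_mono: "tt a \<le> tt b" if "a \<le> b" "b \<le> tau" for a b
  proof (cases "a = 0")
    case True then show ?thesis by (simp add: tt_def)
  next
    case False
    then have "(map fst A)!(a-1) \<le> (map fst A)!(b-1)"
      using that by (intro sorted_nth_mono[OF sF]) (auto simp: tau_def)
    then show ?thesis using that False by (simp add: tt_def tau_def)
  qed
  have o1c: "o1 \<in> outcomes P l" and o1s: "\<forall>(t, lam)\<in>set A. maxdis n D o1 t \<le> lam"
    using o1 unfolding constrained_outcomes_def by auto
  define Good where "Good J \<longleftrightarrow> J \<le> tau \<and> (\<forall>j. J < j \<and> j \<le> tau \<longrightarrow> lam J + k \<le> lam j)" for J
  have "Good tau" by (simp add: Good_def)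
  define J where "J = (LEAST J. Good J)"
  have GJ: "Good J" unfolding J_def by (rule LeastI[of Good tau]) fact
  have notG: "\<not> Good J'" if "J' < J" for J'
    using that not_less_Least unfolding J_def by blast
  have Jtau: "J \<le> tau" using GJ by (simp add: Good_def)
  have lamJ: "lam J' \<le> J' * k" if "J' \<le> J" for J'
    using that
  proof (induction J')
    case 0 then show ?case by (simp add: lam_def)
  next
    case (Suc J')
    then have IH: "lam J' \<le> J' * k" by simp
    have "\<not> Good J'" using Suc.prems by (intro notG) simp
    moreover have "J' \<le> tau" using Suc.prems Jtau by simp
    ultimately obtain j where j: "J' < j" "j \<le> tau" "lam j < lam J' + k"
      unfolding Good_def by auto
    have "lam (Suc J') \<le> lam j" using j by (intro lam_mono) auto
    then show ?case using j IH by simp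
  qed
  have memA: "(tt j, lam j) \<in> set A" if "1 \<le> j" "j \<le> tau" for j
    using that by (simp add: tt_def lam_def tau_def)
  have o1J: "disut D i o1 (tt J) \<le> lam J" if "i \<in> {1..n}" for i
  proof (cases "J = 0")
    case True then show ?thesis using disut_le[of D i o1 0] by (simp add: tt_def lam_def)
  next
    case False
    then have "maxdis n D o1 (tt J) \<le> lam J" using o1s memA[of J] Jtau by auto
    then show ?thesis using disut_le_maxdis[OF that] order_trans by blast
  qed
  define ou where "ou = (\<lambda>t. if t \<le> tt J then o1 t else os t)"
  have bound: "disut D i ou t \<le> lam J + k" if "i \<in> {1..n}" "t \<le> l" for i t
  proof -
    have "disut D i ou t \<le> card ({s\<in>{1..tt J}. o1 s \<in> D i s} \<union> {s\<in>{1..l}. os s \<in> D i s})"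
      unfolding disut_def by (rule card_mono) (use that in \<open>auto simp: ou_def split: if_splits\<close>)
    also have "\<dots> \<le> disut D i o1 (tt J) + disut D i os l"
      unfolding disut_def by (rule card_Un_le)
    also have "\<dots> \<le> lam J + k"
      using o1J[OF that(1)] disut_le_maxdis[OF that(1), of D os l] unfolding k_def by simp
    finally show ?thesis .
  qed
  have "ou \<in> outcomes P l" using o1c os unfolding outcomes_def ou_def by auto
  moreover have "\<forall>(t, lam)\<in>set A. maxdis n D ou t \<le> lam"
  proof (intro ballI, clarify)
    fix t lm assume tl: "(t, lm) \<in> set A"
    then obtain j where j: "j < tau" "A!j = (t, lm)" unfolding tau_def by (auto simp: in_set_conv_nth)
    have ttj: "tt (Suc j) = t" "lam (Suc j) = lm" using j by (auto simp: tt_def lam_def)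
    have tl': "t \<le> l" using inr tl by auto
    show "maxdis n D ou t \<le> lm"
    proof (cases "Suc j \<le> J")
      case True
      then have "t \<le> tt J" using ttj tt_mono Jtau by metis
      then have "maxdis n D ou t \<le> maxdis n D o1 t"
      proof (intro maxdis_leI[OF n1])
        fix i assume i: "i \<in> {1..n}"
        have "disut D i ou t \<le> disut D i o1 t"
          by (rule disut_mono_sub) (use \<open>t \<le> tt J\<close> in \<open>auto simp: ou_def\<close>)
        then show "disut D i ou t \<le> maxdis n D o1 t" using disut_le_maxdis[OF i] order_trans by blast
      qed
      then show ?thesis using o1s tl by auto
    next
      case False
      then have "lam J + k \<le> lm" using GJ j ttj unfolding Good_def by auto
      then show ?thesis using bound tl' by (intro maxdis_leI[OF n1]) (blast intro: order_trans)
    qed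
  qed
  ultimately have ouc: "ou \<in> constrained_outcomes n P l D A"
    unfolding constrained_outcomes_def by auto
  have "maxdis n D ou l \<le> lam J + k" using bound by (intro maxdis_leI[OF n1]) auto
  also have "\<dots> \<le> J * k + k" using lamJ by simp
  also have "\<dots> \<le> tau * k + k" using Jtau by simp
  finally have "maxdis n D ou l \<le> (tau + 1) * k" by simp
  moreover have "minmax_opt n l D (constrained_outcomes n P l D A) \<le> maxdis n D ou l"
    by (rule minmax_le[OF ouc n1])
  ultimately show ?thesis unfolding tau_def k_def by linarith
qed




definition LD :: "nat \<Rightarrow> nat \<Rightarrow> nat \<Rightarrow> nat set" where
  "LD T i t = (if t = 2*T+1 then {0,1} else if 1 \<le> t \<and> t \<le> 2*T then
     (if (t+1) div 2 = i then {0} else if (t+1) div 2 < i then {1} else {}) else {})"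

definition LA :: "nat \<Rightarrow> (nat \<times> nat) list" where
  "LA T = map (\<lambda>j. (2*j, j)) [1..<T+1]"

lemma LD_phase: "1 \<le> t \<Longrightarrow> t \<le> 2*T \<Longrightarrow>
  LD T i t = (if (t+1) div 2 = i then {0} else if (t+1) div 2 < i then {1} else {})"
  by (simp add: LD_def)

lemma LA_valid: "valid_constraints (2*T+1) (LA T)"
  unfolding valid_constraints_def LA_def
  by (auto simp: distinct_map inj_on_def sorted_iff_nth_mono simp del: upt_Suc)

lemma LA_len: "length (LA T) = T" by (simp add: LA_def)

lemma LI_valid: "n \<ge> 1 \<Longrightarrow> valid_instance n {0,1} (2*T+1) (LD T)"
  unfolding valid_instance_def LD_def by auto

definition wit :: "nat \<Rightarrow> nat" where "wit t = (if odd t then 0 else 1)"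

lemma wit_disut: assumes "j \<le> T" shows "disut (LD T) i wit (2*j) \<le> j"
proof -
  let ?S = "{t\<in>{1..2*j}. wit t \<in> LD T i t}"
  have "inj_on (\<lambda>t. (t+1) div 2) ?S"
  proof (rule inj_onI, rule ccontr)
    fix a b assume a: "a \<in> ?S" and b: "b \<in> ?S" and e: "(a+1) div 2 = (b+1) div 2" and ne: "a \<noteq> b"
    have ab: "1 \<le> a" "a \<le> 2*T" "1 \<le> b" "b \<le> 2*T" using a b assms by auto
    have oe: "odd a \<noteq> odd b" using e ne by presburger
    have same: "LD T i a = LD T i b" using ab e by (simp add: LD_phase)
    have cs: "LD T i a = {0} \<or> LD T i a = {1} \<or> LD T i a = {}" using ab by (simp add: LD_phase)
    have wne: "wit a \<noteq> wit b" using oe unfolding wit_def by (cases "odd a") auto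
    have "wit a \<in> LD T i a" "wit b \<in> LD T i a" using a b same by auto
    then show False using cs wne by (metis empty_iff singletonD)
  qed
  then have "card ?S = card ((\<lambda>t. (t+1) div 2) ` ?S)" by (simp add: card_image)
  also have "\<dots> \<le> card {1..j}" by (rule card_mono) auto
  finally show ?thesis by (simp add: disut_def)
qed

lemma wit_in: "n \<ge> 1 \<Longrightarrow> wit \<in> constrained_outcomes n {0,1} (2*T+1) (LD T) (LA T)"
  unfolding constrained_outcomes_def outcomes_def
  by (auto simp: LA_def intro!: maxdis_leI wit_disut) (auto simp: wit_def)

lemma opt_le3: assumes "n \<ge> 1" shows "minmax_opt n (2*T+1) (LD T) (outcomes {0,1} (2*T+1)) \<le> 3"
proof -
  have o0: "(\<lambda>_. 0) \<in> outcomes {0,1} (2*T+1)" by (simp add: outcomes_def)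
  have "disut (LD T) i (\<lambda>_. 0) (2*T+1) \<le> 3" for i
  proof -
    have "disut (LD T) i (\<lambda>_. 0) (2*T+1) \<le> card {2*i-1, 2*i, 2*T+1}"
      unfolding disut_def by (rule card_mono) (auto simp: LD_def split: if_splits)
    also have "\<dots> \<le> 3" by (simp add: card_insert_if)
    finally show ?thesis .
  qed
  then have "maxdis n (LD T) (\<lambda>_. 0) (2*T+1) \<le> 3" by (intro maxdis_leI assms)
  then show ?thesis using minmax_le[OF o0 assms, of "2*T+1" "LD T"] by linarith
qed

lemma opt_pos: assumes "n \<ge> 1" shows "minmax_opt n (2*T+1) (LD T) (outcomes {0,1} (2*T+1)) \<ge> 1"
proof (rule minmax_ge[OF _ assms])
  show "outcomes {0,1} (2*T+1) \<noteq> {}" by (auto simp: outcomes_def)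
next
  fix ou assume ou: "ou \<in> outcomes {0,1} (2*T+1)"
  have "1 \<le> card {2*T+1}" by simp
  also have "\<dots> \<le> disut (LD T) 1 ou (2*T+1)"
    unfolding disut_def by (rule card_mono) (use ou in \<open>auto simp: LD_def outcomes_def\<close>)
  also have "\<dots> \<le> maxdis n (LD T) ou (2*T+1)" by (rule disut_le_maxdis) (use assms in auto)
  finally show "1 \<le> maxdis n (LD T) ou (2*T+1)" .
qed



lemma lb_main:
  assumes n1: "n \<ge> 1" and ou: "ou \<in> constrained_outcomes n {0,1} (2*T+1) (LD T) (LA T)"
  shows "min T n \<le> maxdis n (LD T) ou (2*T+1)"
proof -
  have ov: "ou t \<in> {0,1}" if "1 \<le> t" "t \<le> 2*T+1" for t
    using ou that unfolding constrained_outcomes_def outcomes_def by auto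
  have cap: "maxdis n (LD T) ou (2*j) \<le> j" if "1 \<le> j" "j \<le> T" for j
  proof -
    have "(2*j, j) \<in> set (LA T)" using that by (auto simp: LA_def)
    then show ?thesis using ou unfolding constrained_outcomes_def by auto
  qed
  define z where "z t = (if ou t = 0 then 1 else 0::nat)" for t
  define w where "w t = (if ou t = 1 then 1 else 0::nat)" for t
  define Z where "Z s = (\<Sum>t\<in>{1..s}. z t)" for s
  define W where "W s = (\<Sum>t\<in>{1..s}. w t)" for s
  have ZW: "Z s + W s = s" if "s \<le> 2*T+1" for s
  proof -
    have "Z s + W s = (\<Sum>t\<in>{1..s}. z t + w t)" by (simp add: Z_def W_def sum.distrib)
    also have "\<dots> = (\<Sum>t\<in>{1..s}. 1)"
    proof (rule sum.cong)
      fix t assume "t \<in> {1..s}"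
      then have "ou t \<in> {0,1}" using ov that by auto
      then show "z t + w t = 1" by (auto simp: z_def w_def)
    qed simp
    finally show ?thesis by simp
  qed
  have agent: "disut (LD T) (Suc j) ou (2*Suc j) = W (2*j) + z (2*j+1) + z (2*j+2)"
    if "Suc j \<le> T" for j
  proof -
    have "disut (LD T) (Suc j) ou (2*Suc j) = (\<Sum>t\<in>{1..2*Suc j}. if ou t \<in> LD T (Suc j) t then 1 else 0)"
      unfolding disut_def by (rule card_filter_sum) simp
    also have "\<dots> = (\<Sum>t\<in>{1..2*j}. if ou t \<in> LD T (Suc j) t then 1 else 0)
        + (if ou (2*j+1) \<in> LD T (Suc j) (2*j+1) then 1 else 0)
        + (if ou (2*j+2) \<in> LD T (Suc j) (2*j+2) then 1 else 0)"
      by (simp add: numeral_2_eq_2)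
    also have "(\<Sum>t\<in>{1..2*j}. if ou t \<in> LD T (Suc j) t then 1 else 0) = W (2*j)"
      unfolding W_def
    proof (rule sum.cong)
      fix t assume t: "t \<in> {1..2*j}"
      then have "LD T (Suc j) t = {1}" using that by (subst LD_phase) auto
      then show "(if ou t \<in> LD T (Suc j) t then 1 else 0) = w t" by (simp add: w_def)
    qed simp
    also have "LD T (Suc j) (2*j+1) = {0}" using that by (subst LD_phase) auto
    also have "LD T (Suc j) (2*j+2) = {0}" using that by (subst LD_phase) auto
    finally show ?thesis by (simp add: z_def)
  qed
  have Zb: "Z (2*j) \<le> j" if "j \<le> min T n" for j
    using that
  proof (induction j)
    case 0 then show ?case by (simp add: Z_def)
  next
    case (Suc j)
    have IH: "Z (2*j) \<le> j" using Suc by simp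
    have "disut (LD T) (Suc j) ou (2*Suc j) \<le> maxdis n (LD T) ou (2*Suc j)"
      by (rule disut_le_maxdis) (use Suc.prems in auto)
    also have "\<dots> \<le> Suc j" by (rule cap) (use Suc.prems in auto)
    finally have "W (2*j) + z (2*j+1) + z (2*j+2) \<le> Suc j" using agent Suc.prems by simp
    moreover have "Z (2*j) + W (2*j) = 2*j" using ZW Suc.prems by simp
    moreover have "Z (2*Suc j) = Z (2*j) + z (2*j+1) + z (2*j+2)"
      by (simp add: Z_def numeral_2_eq_2)
    ultimately show ?case using IH by linarith
  qed
  define q where "q = min T (n-1)"
  have "Z (2*q) \<le> q" using Zb[of q] by (simp add: q_def)
  moreover have "Z (2*q) + W (2*q) = 2*q" using ZW by (simp add: q_def)
  ultimately have Wq: "q \<le> W (2*q)" by linarith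
  have "W (2*q) = card {t\<in>{1..2*q}. ou t = 1}"
    unfolding W_def w_def by (rule card_filter_sum[symmetric]) simp
  also have "\<dots> < card (insert (2*T+1) {t\<in>{1..2*q}. ou t = 1})"
    by (subst card_insert_disjoint) (auto simp: q_def)
  also have "\<dots> \<le> disut (LD T) n ou (2*T+1)"
    unfolding disut_def
  proof (rule card_mono)
    show "insert (2*T+1) {t\<in>{1..2*q}. ou t = 1} \<subseteq> {t\<in>{1..2*T+1}. ou t \<in> LD T n t}"
    proof
      fix t assume t: "t \<in> insert (2*T+1) {t\<in>{1..2*q}. ou t = 1}"
      show "t \<in> {t\<in>{1..2*T+1}. ou t \<in> LD T n t}"
      proof (cases "t = 2*T+1")
        case True then show ?thesis using ov[of t] by (simp add: LD_def)
      next
        case False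
        then have t1: "1 \<le> t" "t \<le> 2*q" "ou t = 1" using t by auto
        then have "(t+1) div 2 < n" "t \<le> 2*T" unfolding q_def using n1 by auto
        then have "LD T n t = {1}" using t1 by (subst LD_phase) auto
        then show ?thesis using t1 unfolding q_def by auto
      qed
    qed
  qed simp
  also have "\<dots> \<le> maxdis n (LD T) ou (2*T+1)" by (rule disut_le_maxdis) (use n1 in auto)
  finally have "q < maxdis n (LD T) ou (2*T+1)" using Wq by linarith
  then show ?thesis unfolding q_def by linarith
qed



lemma ratio_ub:
  assumes "x \<in> potf_ratios n tau" "n \<ge> 1" "tau \<ge> 1"
  shows "x \<le> 2 * real (min tau n)"
proof -
  obtain P l D A where x: "x = real (minmax_opt n l D (constrained_outcomes n P l D A)) / real (minmax_opt n l D (outcomes P l))"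
    and vi: "valid_instance n P l D" and vc: "valid_constraints l A" and len: "length A = tau"
    and ne: "constrained_outcomes n P l D A \<noteq> {}" and pos: "minmax_opt n l D (outcomes P l) > 0"
    using assms(1) unfolding potf_ratios_def by blast
  define C where "C = minmax_opt n l D (constrained_outcomes n P l D A)"
  define Opt where "Opt = minmax_opt n l D (outcomes P l)"
  obtain o1 where o1: "o1 \<in> constrained_outcomes n P l D A" using ne by blast
  have "outcomes P l \<noteq> {}" using o1 unfolding constrained_outcomes_def by auto
  then obtain os where os: "os \<in> outcomes P l" and oeq: "Opt = maxdis n D os l"
    using minmax_attained[OF _ assms(2)] unfolding Opt_def by blast
  have c1: "C \<le> n * Opt" using ub_n[OF assms(2) o1 os] oeq C_def by simp
  have c2: "C \<le> (tau + 1) * Opt" using ub_tau[OF assms(2) vc o1 os] oeq C_def len by simp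
  have "C \<le> 2 * min tau n * Opt"
  proof (cases "tau \<le> n")
    case True
    then have "(tau + 1) * Opt \<le> 2 * min tau n * Opt" using assms(3) by (intro mult_right_mono) auto
    then show ?thesis using c2 by linarith
  next
    case False
    then have "n * Opt \<le> 2 * min tau n * Opt" by (intro mult_right_mono) auto
    then show ?thesis using c1 by linarith
  qed
  then have "real C \<le> 2 * real (min tau n) * real Opt" by (metis of_nat_le_iff of_nat_mult of_nat_numeral)
  moreover have "real Opt > 0" using pos Opt_def by simp
  ultimately have "real C / real Opt \<le> 2 * real (min tau n)" by (simp add: divide_le_eq)
  then show ?thesis using x C_def Opt_def by simp
qed

lemma ratio_lb:
  assumes "n \<ge> 1" "tau \<ge> 1"
  shows "\<exists>x\<in>potf_ratios n tau. real (min tau n) / 3 \<le> x"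
proof -
  define C where "C = minmax_opt n (2*tau+1) (LD tau) (constrained_outcomes n {0,1} (2*tau+1) (LD tau) (LA tau))"
  define Opt where "Opt = minmax_opt n (2*tau+1) (LD tau) (outcomes {0,1} (2*tau+1))"
  have ne: "constrained_outcomes n {0,1} (2*tau+1) (LD tau) (LA tau) \<noteq> {}" using wit_in[OF assms(1)] by blast
  have O3: "Opt \<le> 3" "1 \<le> Opt" using opt_le3[OF assms(1)] opt_pos[OF assms(1)] Opt_def by auto
  have Cge: "min tau n \<le> C" unfolding C_def
    by (rule minmax_ge[OF ne assms(1)]) (rule lb_main[OF assms(1)])
  have mem: "real C / real Opt \<in> potf_ratios n tau"
    unfolding potf_ratios_def mem_Collect_eq
    apply (rule exI[of _ "{0,1}"], rule exI[of _ "2*tau+1"], rule exI[of _ "LD tau"], rule exI[of _ "LA tau"])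
    using LI_valid[OF assms(1)] LA_valid[of tau] LA_len[of tau] ne O3 by (auto simp: C_def Opt_def)
  have "real (min tau n) / 3 \<le> real C / 3" using Cge by simp
  also have "\<dots> \<le> real C / real Opt" using O3 by (intro divide_left_mono) auto
  finally show ?thesis using mem by blast
qed

theorem theorem8:
  shows "\<exists>c1 c2 :: real. c1 > 0 \<and> c2 > 0 \<and>
    (\<forall>n tau :: nat. n \<ge> 1 \<longrightarrow> tau \<ge> 1 \<longrightarrow>
       ereal (c1 * real (min tau n)) \<le> PoTF_MinMax n tau \<and>
       PoTF_MinMax n tau \<le> ereal (c2 * real (min tau n)))"
proof (rule exI[of _ "1/3"], rule exI[of _ 2], intro conjI allI impI)
  fix n tau :: nat assume a: "n \<ge> 1" "tau \<ge> 1"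
  obtain x where x: "x \<in> potf_ratios n tau" "real (min tau n) / 3 \<le> x" using ratio_lb[OF a] by blast
  have "ereal (1/3 * real (min tau n)) \<le> ereal x" using x(2) by simp
  also have "\<dots> \<le> PoTF_MinMax n tau" unfolding PoTF_MinMax_def by (rule SUP_upper) (rule x(1))
  finally show "ereal (1/3 * real (min tau n)) \<le> PoTF_MinMax n tau" .
  show "PoTF_MinMax n tau \<le> ereal (2 * real (min tau n))"
    unfolding PoTF_MinMax_def by (rule SUP_least) (use ratio_ub[OF _ a] in simp)
qed simp_all


end
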